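(* Let $G$ be a finite abelian group such that $G$ is not isomorphic to $C_2^2$ (the Klein four-group). Then $\operatorname{Aut}(\mathcal{P}_{0}(G))\simeq \operatorname{Aut}(G)$.
   Context: For an additively written finite abelian group $G$, the reduced power monoid $\mathcal{P}_{0}(G)$ is the set of all subsets of $G$ containing $0$, with the operation of setwise addition $X+Y=\{x+y : x\in X, y\in Y\}$ and identity $\{0\}$. $\operatorname{Aut}$ denotes the group of monoid (resp. group) automorphisms. $C_n$ denotes the cyclic group of order $n$. (In the paper, the isomorphism arises from the canonical embedding $\operatorname{Aut}(G)\to\operatorname{Aut}(\mathcal{P}_0(G))$, $h\mapsto F_h$, where $F_h(X)=\{h(x):x\in X\}$.) *)

theory Defs
  imports "HOL-Algebra.Algebra"
begin

definition reduced_power_monoid :: "('a, 'b) monoid_scheme \<Rightarrow> 'a set monoid" where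
  "reduced_power_monoid G =
     \<lparr> partial_object.carrier = {Y. Y \<subseteq> carrier G \<and> one G \<in> Y},
       monoid.mult = (\<lambda>A B. set_mult G A B),
       monoid.one = {one G} \<rparr>"

end

theory Submission
  imports Defs
begin
lemma RPM_carrier: "carrier (reduced_power_monoid G) = {Y. Y \<subseteq> carrier G \<and> \<one>\<^bsub>G\<^esub> \<in> Y}"
  by (simp add: reduced_power_monoid_def)
lemma RPM_mult: "A \<otimes>\<^bsub>reduced_power_monoid G\<^esub> B = A <#>\<^bsub>G\<^esub> B"
  by (simp add: reduced_power_monoid_def)

context comm_group begin

abbreviation "PP \<equiv> {Y. Y \<subseteq> carrier G \<and> \<one> \<in> Y}"
abbreviation "st A \<equiv> (\<forall>s\<in>carrier G. (\<forall>x\<in>A. x \<otimes> s \<in> A) \<longrightarrow> s = \<one>)"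

lemma c1 [simp]: "x \<in> carrier G \<Longrightarrow> y \<in> carrier G \<Longrightarrow> x \<otimes> (inv x \<otimes> y) = y"
  by (simp add: m_assoc[symmetric])
lemma c2 [simp]: "x \<in> carrier G \<Longrightarrow> y \<in> carrier G \<Longrightarrow> inv x \<otimes> (x \<otimes> y) = y"
  by (simp add: m_assoc[symmetric])
lemma c3 [simp]: "x \<in> carrier G \<Longrightarrow> y \<in> carrier G \<Longrightarrow> y \<otimes> (x \<otimes> inv y) = x"
  by (simp add: m_lcomm)
lemma c4 [simp]: "x \<in> carrier G \<Longrightarrow> y \<in> carrier G \<Longrightarrow> inv y \<otimes> (x \<otimes> y) = x"
  by (simp add: m_lcomm)
lemma c5 [simp]: "x \<in> carrier G \<Longrightarrow> y \<in> carrier G \<Longrightarrow> x \<otimes> y \<otimes> inv y = x"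
  by (simp add: m_assoc)
lemma c6 [simp]: "x \<in> carrier G \<Longrightarrow> y \<in> carrier G \<Longrightarrow> x \<otimes> inv y \<otimes> y = x"
  by (simp add: m_assoc)
lemma div_one: "x \<in> carrier G \<Longrightarrow> y \<in> carrier G \<Longrightarrow> x \<otimes> inv y = \<one> \<longleftrightarrow> x = y"
  using inv_solve_right'[of \<one> x y] by simp
lemma eq_div: "a \<in> carrier G \<Longrightarrow> b \<in> carrier G \<Longrightarrow> c \<in> carrier G \<Longrightarrow> a \<otimes> b = c \<longleftrightarrow> a = c \<otimes> inv b"
  using inv_solve_right[of a c b] by auto

lemma X2: "a \<in> carrier G \<Longrightarrow> b \<in> carrier G \<Longrightarrow> c \<in> carrier G \<Longrightarrow> d \<in> carrier G \<Longrightarrow>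
  inv a \<otimes> b = c \<otimes> inv d \<longleftrightarrow> b \<otimes> d = a \<otimes> c"
proof -
  assume abcd: "a \<in> carrier G" "b \<in> carrier G" "c \<in> carrier G" "d \<in> carrier G"
  have "inv a \<otimes> b = c \<otimes> inv d \<longleftrightarrow> c = inv a \<otimes> b \<otimes> d"
    using inv_solve_right[of "inv a \<otimes> b" c d] abcd by simp
  also have "\<dots> \<longleftrightarrow> c = inv a \<otimes> (b \<otimes> d)" using abcd by (simp add: m_assoc)
  also have "\<dots> \<longleftrightarrow> b \<otimes> d = a \<otimes> c" using inv_solve_left[of c a "b \<otimes> d"] abcd by simp
  finally show ?thesis .
qed

lemma sm_sub: "A \<subseteq> carrier G \<Longrightarrow> B \<subseteq> carrier G \<Longrightarrow> A <#> B \<subseteq> carrier G"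
  by (auto simp: set_mult_def)
lemma sm_one: "A \<subseteq> carrier G \<Longrightarrow> A <#> {\<one>} = A"
  by (auto simp: set_mult_def) (metis r_one subsetD)
lemma sm_one_left: "A \<subseteq> carrier G \<Longrightarrow> {\<one>} <#> A = A"
  by (auto simp: set_mult_def) (metis l_one subsetD)
lemma sm_sup1: "A \<subseteq> carrier G \<Longrightarrow> \<one> \<in> B \<Longrightarrow> A \<subseteq> A <#> B"
  by (auto simp: set_mult_def) (metis r_one subsetD)
lemma sm_sup2: "B \<subseteq> carrier G \<Longrightarrow> \<one> \<in> A \<Longrightarrow> B \<subseteq> A <#> B"
  by (auto simp: set_mult_def) (metis l_one subsetD)
lemma sm_PP: "A \<in> PP \<Longrightarrow> B \<in> PP \<Longrightarrow> A <#> B \<in> PP"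
  using sm_sub[of A B] sm_sup1[of A B] by auto
lemma sm_comm: "A \<subseteq> carrier G \<Longrightarrow> B \<subseteq> carrier G \<Longrightarrow> A <#> B = B <#> A"
  by (auto simp: set_mult_def) (metis m_comm subsetD)+
lemma sm_G: "A \<in> PP \<Longrightarrow> A <#> carrier G = carrier G"
  using sm_sub[of A "carrier G"] sm_sup2[of "carrier G" A] by auto
lemma sm_mem: "a \<in> A \<Longrightarrow> b \<in> B \<Longrightarrow> a \<otimes> b \<in> A <#> B"
  by (auto simp: set_mult_def)
lemma sm_E: "w \<in> A <#> B \<Longrightarrow> (\<And>a b. a \<in> A \<Longrightarrow> b \<in> B \<Longrightarrow> w = a \<otimes> b \<Longrightarrow> thesis) \<Longrightarrow> thesis"
  by (auto simp: set_mult_def)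
lemma sm_mono: "A \<subseteq> A' \<Longrightarrow> A <#> B \<subseteq> A' <#> B"
  by (auto simp: set_mult_def)

lemma stab_img:
  assumes "finite (carrier G)" "A \<subseteq> carrier G" "s \<in> carrier G" "\<forall>x\<in>A. x \<otimes> s \<in> A"
  shows "(\<lambda>x. x \<otimes> s) ` A = A"
proof (rule endo_inj_surj)
  show "finite A" using assms finite_subset by blast
  show "(\<lambda>x. x \<otimes> s) ` A \<subseteq> A" using assms by auto
  show "inj_on (\<lambda>x. x \<otimes> s) A" using assms by (auto simp: inj_on_def subsetD)
qed

lemma stab_inv:
  assumes "finite (carrier G)" "A \<subseteq> carrier G" "s \<in> carrier G" "\<forall>x\<in>A. x \<otimes> s \<in> A" "x \<in> A"
  shows "x \<otimes> inv s \<in> A"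
proof -
  from stab_img[OF assms(1-4)] assms(5) obtain y where y: "y \<in> A" "x = y \<otimes> s" by auto
  have "y \<in> carrier G" using y assms by auto
  then have "x \<otimes> inv s = y" using y assms by simp
  with y show ?thesis by simp
qed

lemma coatom_char:
  assumes "M \<in> PP"
  shows "(\<exists>b\<in>carrier G. b \<noteq> \<one> \<and> M = carrier G - {b}) \<longleftrightarrow>
         (M \<noteq> carrier G \<and> (\<forall>Y\<in>PP. Y \<noteq> {\<one>} \<longrightarrow> M <#> Y = carrier G))"
proof
  assume "\<exists>b\<in>carrier G. b \<noteq> \<one> \<and> M = carrier G - {b}"
  then obtain b where b: "b \<in> carrier G" "b \<noteq> \<one>" "M = carrier G - {b}" by blast
  show "M \<noteq> carrier G \<and> (\<forall>Y\<in>PP. Y \<noteq> {\<one>} \<longrightarrow> M <#> Y = carrier G)"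
  proof (intro conjI ballI impI)
    show "M \<noteq> carrier G" using b by auto
    fix Y assume Y: "Y \<in> PP" "Y \<noteq> {\<one>}"
    then obtain y where y: "y \<in> Y" "y \<noteq> \<one>" by auto
    have yc: "y \<in> carrier G" using Y y by auto
    show "M <#> Y = carrier G"
    proof
      show "M <#> Y \<subseteq> carrier G" using sm_sub[of M Y] Y b by auto
      show "carrier G \<subseteq> M <#> Y"
      proof
        fix w assume w: "w \<in> carrier G"
        show "w \<in> M <#> Y"
        proof (cases "w = b")
          case False
          then have "w \<otimes> \<one> \<in> M <#> Y" using w b Y by (intro sm_mem) auto
          then show ?thesis using w by simp
        next
          case True
          have "b \<otimes> inv y \<in> M" using b yc y by (auto simp: inv_solve_right)
          then have "(b \<otimes> inv y) \<otimes> y \<in> M <#> Y" using y by (intro sm_mem)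
          then show ?thesis using True b yc by (simp add: m_assoc)
        qed
      qed
    qed
  qed
next
  assume R: "M \<noteq> carrier G \<and> (\<forall>Y\<in>PP. Y \<noteq> {\<one>} \<longrightarrow> M <#> Y = carrier G)"
  then obtain b where b: "b \<in> carrier G" "b \<notin> M" using assms by auto
  have b1: "b \<noteq> \<one>" using b assms by auto
  have "M = carrier G - {b}"
  proof (rule ccontr)
    assume "M \<noteq> carrier G - {b}"
    then obtain b' where b': "b' \<in> carrier G" "b' \<notin> M" "b' \<noteq> b" using assms b by auto
    let ?Y = "{\<one>, b \<otimes> inv b'}"
    have Y: "?Y \<in> PP" using b b' by auto
    have "b \<otimes> inv b' \<noteq> \<one>" using b b' by (simp add: div_one)
    then have "?Y \<noteq> {\<one>}" by auto
    with R Y have "M <#> ?Y = carrier G" by blast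
    then have "b \<in> M <#> ?Y" using b by simp
    then obtain m y where my: "m \<in> M" "y \<in> ?Y" "b = m \<otimes> y" by (rule sm_E)
    have mc: "m \<in> carrier G" using my assms by auto
    show False
    proof (cases "y = \<one>")
      case True then show ?thesis using my mc b by simp
    next
      case False
      then have "y = b \<otimes> inv b'" using my by auto
      then have "m \<otimes> (b \<otimes> inv b') = b" using my by simp
      then have "b \<otimes> (m \<otimes> inv b') = b \<otimes> \<one>" using mc b b' by (simp add: m_lcomm)
      then have "m \<otimes> inv b' = \<one>" using mc b b' by (simp del: r_one)
      then have "m = b'" using mc b' by (simp add: div_one)
      then show ?thesis using my b' by simp
    qed
  qed
  then show "\<exists>b\<in>carrier G. b \<noteq> \<one> \<and> M = carrier G - {b}" using b b1 by blast
qed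

definition ymx :: "'a \<Rightarrow> 'a set \<Rightarrow> 'a set" where
  "ymx p A = carrier G - {p \<otimes> inv x | x. x \<in> A}"

lemma ymx_PP: assumes "A \<in> PP" "p \<in> carrier G" "p \<notin> A" shows "ymx p A \<in> PP"
proof -
  have "\<one> \<noteq> p \<otimes> inv x" if "x \<in> A" for x
  proof
    assume "\<one> = p \<otimes> inv x"
    moreover have "x \<in> carrier G" using that assms by auto
    ultimately have "p = x" using assms div_one[of p x] by auto
    then show False using that assms by simp
  qed
  then show ?thesis unfolding ymx_def by auto
qed

lemma ymx_mult:
  assumes A: "A \<in> PP" "st A" and p: "p \<in> carrier G" "p \<notin> A"
  shows "A <#> ymx p A = carrier G - {p}"
proof
  have Y: "ymx p A \<in> PP" using ymx_PP A p by auto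
  show "A <#> ymx p A \<subseteq> carrier G - {p}"
  proof
    fix w assume "w \<in> A <#> ymx p A"
    then obtain x y where xy: "x \<in> A" "y \<in> ymx p A" "w = x \<otimes> y" by (rule sm_E)
    have xc: "x \<in> carrier G" and yc: "y \<in> carrier G" using xy A Y by auto
    have "w \<noteq> p"
    proof
      assume "w = p"
      then have "y = inv x \<otimes> p" using xy xc yc p
        by (simp add: inv_solve_left)
      then have "y = p \<otimes> inv x" using xc p by (simp add: m_comm)
      then show False using xy(1,2) unfolding ymx_def by auto
    qed
    then show "w \<in> carrier G - {p}" using xc yc xy by auto
  qed
  show "carrier G - {p} \<subseteq> A <#> ymx p A"
  proof
    fix w assume w: "w \<in> carrier G - {p}"
    show "w \<in> A <#> ymx p A"
    proof (rule ccontr)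
      assume nw: "w \<notin> A <#> ymx p A"
      have "\<forall>x\<in>A. x \<otimes> (p \<otimes> inv w) \<in> A"
      proof
        fix x assume x: "x \<in> A"
        have xc: "x \<in> carrier G" using x A by auto
        have "x \<otimes> (inv x \<otimes> w) = w" using xc w by (simp add: m_assoc[symmetric])
        then have "inv x \<otimes> w \<notin> ymx p A" using nw x sm_mem[of x A "inv x \<otimes> w" "ymx p A"] by auto
        then obtain x' where x': "x' \<in> A" "inv x \<otimes> w = p \<otimes> inv x'"
          using xc w unfolding ymx_def by auto
        have x'c: "x' \<in> carrier G" using x' A by auto
        have "x \<otimes> (p \<otimes> inv w) = x'"
        proof -
          have pe: "p = inv x \<otimes> w \<otimes> x'" using x' x'c xc w p by (simp add: eq_div)
          have "x \<otimes> (p \<otimes> inv w) = x \<otimes> (inv x \<otimes> (w \<otimes> (x' \<otimes> inv w)))"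
            using xc w x'c by (simp add: pe m_assoc)
          also have "\<dots> = x'" using xc w x'c by simp
          finally show ?thesis .
        qed
        then show "x \<otimes> (p \<otimes> inv w) \<in> A" using x' by simp
      qed
      moreover have "p \<otimes> inv w \<in> carrier G" using p w by auto
      ultimately have "p \<otimes> inv w = \<one>" using A(2) by blast
      then have "p = w" using p w by (simp add: div_one)
      then show False using w by auto
    qed
  qed
qed

lemma ymx_conv: "B \<in> PP \<Longrightarrow> A \<subseteq> carrier G \<Longrightarrow> A <#> B = carrier G - {p} \<Longrightarrow> p \<notin> A"
  using sm_sup1[of A B] by auto

lemma ymx_st:
  assumes fin: "finite (carrier G)" and A: "A \<in> PP" "st A" and p: "p \<in> carrier G" "p \<notin> A"
  shows "st (ymx p A)"
proof (intro ballI impI)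
  fix s assume s: "s \<in> carrier G" and hs: "\<forall>x\<in>ymx p A. x \<otimes> s \<in> ymx p A"
  have Y: "ymx p A \<subseteq> carrier G" unfolding ymx_def by auto
  have img: "(\<lambda>x. x \<otimes> s) ` ymx p A = ymx p A" using stab_img[OF fin Y s hs] .
  have "\<forall>x\<in>A. x \<otimes> inv s \<in> A"
  proof
    fix x assume x: "x \<in> A"
    have xc: "x \<in> carrier G" using x A by auto
    let ?z = "p \<otimes> inv x"
    have zc: "?z \<in> carrier G" using xc p by auto
    have "?z \<notin> ymx p A" using x unfolding ymx_def by auto
    have "?z \<otimes> s \<notin> ymx p A"
    proof
      assume "?z \<otimes> s \<in> ymx p A"
      then have "?z \<otimes> s \<in> (\<lambda>x. x \<otimes> s) ` ymx p A" using img by simp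
      then obtain y where "y \<in> ymx p A" "?z \<otimes> s = y \<otimes> s" by blast
      then have "?z = y" using zc s Y by auto
      with \<open>?z \<notin> ymx p A\<close> \<open>y \<in> ymx p A\<close> show False by simp
    qed
    then obtain x' where x': "x' \<in> A" "?z \<otimes> s = p \<otimes> inv x'" using zc s unfolding ymx_def by auto
    have x'c: "x' \<in> carrier G" using x' A by auto
    have "x \<otimes> inv s = x'"
    proof -
      have "p \<otimes> inv x \<otimes> s \<otimes> x' = p" using x' x'c p by (simp add: eq_div)
      then have "p \<otimes> (inv x \<otimes> (s \<otimes> x')) = p \<otimes> \<one>" using p xc s x'c by (simp add: m_assoc)
      then have "inv x \<otimes> (s \<otimes> x') = \<one>" using p xc s x'c by (simp del: r_one)
      then have "x \<otimes> (inv x \<otimes> (s \<otimes> x')) = x" using xc by simp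
      then have "x' \<otimes> s = x" using xc s x'c by (simp add: m_comm)
      then have "x \<otimes> inv s = x' \<otimes> s \<otimes> inv s" by simp
      then show ?thesis using xc s x'c by simp
    qed
    then show "x \<otimes> inv s \<in> A" using x' by simp
  qed
  moreover have "inv s \<in> carrier G" using s by simp
  ultimately have "inv s = \<one>" using A(2) by blast
  then show "s = \<one>" using s by simp
qed

end

context comm_group begin

lemma ymx_notin:
  assumes A: "A \<in> PP" and p: "p \<in> carrier G" "p \<notin> A"
  shows "p \<notin> A <#> ymx p A"
proof
  have Y: "ymx p A \<in> PP" using ymx_PP A p by auto
  assume "p \<in> A <#> ymx p A"
  then obtain x y where xy: "x \<in> A" "y \<in> ymx p A" "p = x \<otimes> y" by (rule sm_E)
  have xc: "x \<in> carrier G" and yc: "y \<in> carrier G" using xy A Y by auto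
  have "y = inv x \<otimes> p" using xy xc yc p by (simp add: inv_solve_left)
  then have "y = p \<otimes> inv x" using xc p by (simp add: m_comm)
  then show False using xy(1,2) unfolding ymx_def by auto
qed

lemma nst_char:
  assumes "A \<in> PP"
  shows "(\<not> st A) \<longleftrightarrow> (\<exists>Z\<in>PP. Z \<noteq> {\<one>} \<and> A <#> Z = A)"
proof
  assume "\<not> st A"
  then obtain s where s: "s \<in> carrier G" "\<forall>x\<in>A. x \<otimes> s \<in> A" "s \<noteq> \<one>" by blast
  have "A <#> {\<one>, s} = A"
  proof
    show "A <#> {\<one>, s} \<subseteq> A"
    proof
      fix w assume "w \<in> A <#> {\<one>, s}"
      then obtain x y where "x \<in> A" "y \<in> {\<one>, s}" "w = x \<otimes> y" by (rule sm_E)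
      then show "w \<in> A" using s assms by auto
    qed
    show "A \<subseteq> A <#> {\<one>, s}" using sm_sup1[of A "{\<one>, s}"] assms by auto
  qed
  moreover have "{\<one>, s} \<in> PP" "{\<one>, s} \<noteq> {\<one>}" using s by auto
  ultimately show "\<exists>Z\<in>PP. Z \<noteq> {\<one>} \<and> A <#> Z = A" by blast
next
  assume "\<exists>Z\<in>PP. Z \<noteq> {\<one>} \<and> A <#> Z = A"
  then obtain Z where Z: "Z \<in> PP" "Z \<noteq> {\<one>}" "A <#> Z = A" by blast
  then obtain z where z: "z \<in> Z" "z \<noteq> \<one>" by auto
  have "\<forall>x\<in>A. x \<otimes> z \<in> A" using Z z sm_mem[of _ A z Z] by auto
  moreover have "z \<in> carrier G" using z Z by auto
  ultimately show "\<not> st A" using z by blast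
qed

definition le_tr :: "'a set \<Rightarrow> 'a set \<Rightarrow> bool" where
  "le_tr B A \<longleftrightarrow> (\<forall>C\<in>PP. A <#> C \<noteq> carrier G \<longrightarrow> B <#> C \<noteq> carrier G)"

lemma le_tr_sub: assumes "A \<subseteq> carrier G" "B \<subseteq> A" shows "le_tr B A"
  unfolding le_tr_def
proof (intro ballI impI notI)
  fix C assume C: "C \<in> PP" "A <#> C \<noteq> carrier G" and BC: "B <#> C = carrier G"
  have "B <#> C \<subseteq> A <#> C" using sm_mono[OF assms(2)] by blast
  moreover have "A <#> C \<subseteq> carrier G" using sm_sub assms C by auto
  ultimately show False using BC C by auto
qed

lemma le_tr_tr:
  assumes "le_tr B A" "A \<in> PP" "B \<in> PP" "A \<noteq> carrier G"
  shows "\<exists>s\<in>carrier G. \<forall>y\<in>B. \<exists>x\<in>A. y = x \<otimes> s"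
proof -
  obtain g where g: "g \<in> carrier G" "g \<notin> A" using assms by auto
  let ?C = "ymx g A"
  have C: "?C \<in> PP" using ymx_PP assms g by auto
  have "g \<notin> A <#> ?C" using ymx_notin assms g by auto
  then have "A <#> ?C \<noteq> carrier G" using g by auto
  then have "B <#> ?C \<noteq> carrier G" using assms(1) C unfolding le_tr_def by auto
  moreover have "B <#> ?C \<subseteq> carrier G" using sm_sub assms C by auto
  ultimately obtain u where u: "u \<in> carrier G" "u \<notin> B <#> ?C" by auto
  have "\<forall>y\<in>B. \<exists>x\<in>A. y = x \<otimes> (u \<otimes> inv g)"
  proof
    fix y assume y: "y \<in> B"
    have yc: "y \<in> carrier G" using y assms by auto
    have "y \<otimes> (inv y \<otimes> u) = u" using yc u by simp
    then have "inv y \<otimes> u \<notin> ?C" using u y sm_mem[of y B "inv y \<otimes> u" ?C] by auto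
    then obtain x where x: "x \<in> A" "inv y \<otimes> u = g \<otimes> inv x" using yc u unfolding ymx_def by auto
    have xc: "x \<in> carrier G" using x assms by auto
    have "y = x \<otimes> (u \<otimes> inv g)"
    proof -
      have e: "u \<otimes> x = y \<otimes> g" using x(2) X2[of y u g x] xc yc u g by simp
      have "x \<otimes> (u \<otimes> inv g) = (u \<otimes> x) \<otimes> inv g" using m_lcomm[of x u "inv g"] m_assoc[of u x "inv g"] xc u g by simp
      also have "\<dots> = y" using e yc g by simp
      finally show ?thesis by simp
    qed
    then show "\<exists>x\<in>A. y = x \<otimes> (u \<otimes> inv g)" using x by blast
  qed
  then show ?thesis using u g by auto
qed

lemma img_sm:
  assumes "\<forall>x\<in>carrier G. \<forall>y\<in>carrier G. h (x \<otimes> y) = h x \<otimes> h y" "B \<subseteq> carrier G" "C \<subseteq> carrier G"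
  shows "h ` (B <#> C) = h ` B <#> h ` C"
proof
  show "h ` (B <#> C) \<subseteq> h ` B <#> h ` C"
  proof
    fix w assume "w \<in> h ` (B <#> C)"
    then obtain z where z: "z \<in> B <#> C" "w = h z" by auto
    then obtain x y where xy: "x \<in> B" "y \<in> C" "z = x \<otimes> y" by (auto elim: sm_E)
    then have "x \<in> carrier G" "y \<in> carrier G" using assms by auto
    then have "w = h x \<otimes> h y" using z xy assms(1) by simp
    then show "w \<in> h ` B <#> h ` C" using xy by (auto intro: sm_mem)
  qed
  show "h ` B <#> h ` C \<subseteq> h ` (B <#> C)"
  proof
    fix w assume "w \<in> h ` B <#> h ` C"
    then obtain x y where xy: "x \<in> B" "y \<in> C" "w = h x \<otimes> h y" by (auto elim!: sm_E)
    then have "x \<in> carrier G" "y \<in> carrier G" using assms by auto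
    then have "w = h (x \<otimes> y)" using xy assms(1) by simp
    moreover have "x \<otimes> y \<in> B <#> C" using xy(1,2) by (rule sm_mem)
    ultimately show "w \<in> h ` (B <#> C)" by blast
  qed
qed

end

locale rpm_aut = comm_group G for G (structure) +
  fixes f :: "'a set \<Rightarrow> 'a set"
  assumes fin: "finite (carrier G)"
    and f_hom0: "f \<in> hom (reduced_power_monoid G) (reduced_power_monoid G)"
    and f_bij0: "bij_betw f PP PP"
begin

lemma f_PP: "A \<in> PP \<Longrightarrow> f A \<in> PP"
  using f_bij0 bij_betwE by blast
lemma f_mult: "A \<in> PP \<Longrightarrow> B \<in> PP \<Longrightarrow> f (A <#> B) = f A <#> f B"
  using f_hom0 by (auto simp: hom_def RPM_carrier RPM_mult)
lemma f_inj: "A \<in> PP \<Longrightarrow> B \<in> PP \<Longrightarrow> f A = f B \<Longrightarrow> A = B"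
  using f_bij0 unfolding bij_betw_def inj_on_def by blast
lemma f_img_PP: "f ` PP = PP"
  using f_bij0 unfolding bij_betw_def by blast
lemma f_surj: "B \<in> PP \<Longrightarrow> \<exists>A\<in>PP. f A = B"
proof -
  assume "B \<in> PP"
  then have "B \<in> f ` PP" using f_img_PP by simp
  then show ?thesis by blast
qed
lemma G_PP: "carrier G \<in> PP" by auto
lemma one_PP: "{\<one>} \<in> PP" by auto

lemma f_G: "f (carrier G) = carrier G"
proof -
  have fG: "f (carrier G) \<in> PP" using f_PP[OF G_PP] .
  obtain A where A: "A \<in> PP" "f A = carrier G" using f_surj[OF G_PP] by blast
  have "f (A <#> carrier G) = f (carrier G)" using sm_G[OF A(1)] by simp
  then have "carrier G <#> f (carrier G) = f (carrier G)" using f_mult[OF A(1) G_PP] A(2) by simp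
  moreover have "carrier G <#> f (carrier G) = carrier G"
    using sm_comm[of "carrier G" "f (carrier G)"] sm_G[OF fG] fG by auto
  ultimately show ?thesis by simp
qed

lemma f_one: "f {\<one>} = {\<one>}"
proof -
  obtain A where A: "A \<in> PP" "f A = {\<one>}" using f_surj[OF one_PP] by blast
  have f1: "f {\<one>} \<in> PP" using f_PP[OF one_PP] .
  have "f ({\<one>} <#> A) = f {\<one>} <#> {\<one>}" using f_mult[OF one_PP A(1)] A(2) by simp
  also have "\<dots> = f {\<one>}" using sm_one f1 by auto
  finally have "f A = f {\<one>}" using sm_one_left A by simp
  then show ?thesis using A by simp
qed

lemma f_ne_G: "A \<in> PP \<Longrightarrow> A \<noteq> carrier G \<Longrightarrow> f A \<noteq> carrier G"
  using f_inj[OF _ G_PP] f_G by metis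

lemma f_ne_one: "A \<in> PP \<Longrightarrow> A \<noteq> {\<one>} \<Longrightarrow> f A \<noteq> {\<one>}"
  using f_inj[OF _ one_PP] f_one by metis

lemma f_coatom:
  assumes b: "b \<in> carrier G" "b \<noteq> \<one>"
  shows "\<exists>c\<in>carrier G. c \<noteq> \<one> \<and> f (carrier G - {b}) = carrier G - {c}"
proof -
  let ?M = "carrier G - {b}"
  have M: "?M \<in> PP" using b by auto
  have "?M \<noteq> carrier G \<and> (\<forall>Y\<in>PP. Y \<noteq> {\<one>} \<longrightarrow> ?M <#> Y = carrier G)"
    using coatom_char[OF M] b by blast
  then have h: "?M \<noteq> carrier G" "\<And>Y. Y \<in> PP \<Longrightarrow> Y \<noteq> {\<one>} \<Longrightarrow> ?M <#> Y = carrier G" by auto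
  have fM: "f ?M \<in> PP" using f_PP[OF M] .
  have "f ?M \<noteq> carrier G \<and> (\<forall>Y\<in>PP. Y \<noteq> {\<one>} \<longrightarrow> f ?M <#> Y = carrier G)"
  proof (intro conjI ballI impI)
    show "f ?M \<noteq> carrier G" using f_ne_G[OF M h(1)] .
    fix Y assume Y: "Y \<in> PP" "Y \<noteq> {\<one>}"
    obtain Y0 where Y0: "Y0 \<in> PP" "f Y0 = Y" using f_surj[OF Y(1)] by blast
    have "Y0 \<noteq> {\<one>}" using Y0 Y f_one by auto
    then have "?M <#> Y0 = carrier G" using h(2)[OF Y0(1)] by blast
    then have "f (?M <#> Y0) = carrier G" using f_G by simp
    then show "f ?M <#> Y = carrier G" using f_mult[OF M Y0(1)] Y0(2) by simp
  qed
  then show ?thesis using coatom_char[OF fM] by blast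
qed

lemma f_st: assumes A: "A \<in> PP" "st A" shows "st (f A)"
proof (rule ccontr)
  assume "\<not> st (f A)"
  then obtain Z where Z: "Z \<in> PP" "Z \<noteq> {\<one>}" "f A <#> Z = f A" using nst_char[OF f_PP[OF A(1)]] by blast
  obtain Z0 where Z0: "Z0 \<in> PP" "f Z0 = Z" using f_surj[OF Z(1)] by blast
  have "f (A <#> Z0) = f A" using f_mult[OF A(1) Z0(1)] Z0(2) Z(3) by simp
  then have "A <#> Z0 = A" using f_inj[OF sm_PP[OF A(1) Z0(1)] A(1)] by blast
  moreover have "Z0 \<noteq> {\<one>}" using Z Z0 f_one by auto
  ultimately have "\<not> st A" using nst_char[OF A(1)] Z0(1) by blast
  then show False using A(2) by blast
qed

definition sg :: "'a \<Rightarrow> 'a" where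
  "sg b = (if b = \<one> then \<one> else (SOME c. c \<in> carrier G \<and> c \<noteq> \<one> \<and> f (carrier G - {b}) = carrier G - {c}))"

lemma sg_prop:
  assumes "b \<in> carrier G" "b \<noteq> \<one>"
  shows "sg b \<in> carrier G \<and> sg b \<noteq> \<one> \<and> f (carrier G - {b}) = carrier G - {sg b}"
proof -
  have "\<exists>c. c \<in> carrier G \<and> c \<noteq> \<one> \<and> f (carrier G - {b}) = carrier G - {c}"
    using f_coatom assms by blast
  then have "(SOME c. c \<in> carrier G \<and> c \<noteq> \<one> \<and> f (carrier G - {b}) = carrier G - {c}) \<in> carrier G \<and>
     (SOME c. c \<in> carrier G \<and> c \<noteq> \<one> \<and> f (carrier G - {b}) = carrier G - {c}) \<noteq> \<one> \<and>
     f (carrier G - {b}) = carrier G - {SOME c. c \<in> carrier G \<and> c \<noteq> \<one> \<and> f (carrier G - {b}) = carrier G - {c}}"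
    by (rule someI_ex)
  then show ?thesis unfolding sg_def using assms by simp
qed

lemma sg_one [simp]: "sg \<one> = \<one>" by (simp add: sg_def)
lemma sg_closed: "b \<in> carrier G \<Longrightarrow> sg b \<in> carrier G"
  using sg_prop by (cases "b = \<one>") auto
lemma sg_is_one: "b \<in> carrier G \<Longrightarrow> sg b = \<one> \<longleftrightarrow> b = \<one>"
  using sg_prop by (cases "b = \<one>") auto
lemma sg_coatom: "b \<in> carrier G \<Longrightarrow> b \<noteq> \<one> \<Longrightarrow> f (carrier G - {b}) = carrier G - {sg b}"
  using sg_prop by blast

lemma sg_inj: "inj_on sg (carrier G)"
proof (rule inj_onI)
  fix x y assume xy: "x \<in> carrier G" "y \<in> carrier G" "sg x = sg y"
  show "x = y"
  proof (cases "x = \<one>")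
    case True
    then have "sg y = \<one>" using xy by simp
    then have "y = \<one>" using sg_is_one[OF xy(2)] by blast
    then show ?thesis using True by simp
  next
    case False
    then have "sg x \<noteq> \<one>" using sg_is_one[OF xy(1)] by blast
    then have "sg y \<noteq> \<one>" using xy by simp
    then have y1: "y \<noteq> \<one>" by auto
    have "f (carrier G - {x}) = f (carrier G - {y})" using sg_coatom xy False y1 by simp
    moreover have "carrier G - {x} \<in> PP" "carrier G - {y} \<in> PP" using xy False y1 by auto
    ultimately have "carrier G - {x} = carrier G - {y}" using f_inj by blast
    then show ?thesis using xy by auto
  qed
qed

lemma sg_img: "sg ` carrier G = carrier G"
  using endo_inj_surj[OF fin _ sg_inj] sg_closed by auto

lemma sg_surj: "c \<in> carrier G \<Longrightarrow> \<exists>b\<in>carrier G. sg b = c"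
proof -
  assume "c \<in> carrier G"
  then have "c \<in> sg ` carrier G" using sg_img by simp
  then show ?thesis by blast
qed

lemma f_st_img:
  assumes A: "A \<in> PP" "st A"
  shows "f A = sg ` A"
proof -
  have fA: "f A \<in> PP" "st (f A)" using f_PP[OF A(1)] f_st[OF A] by auto
  have key: "b \<in> A \<longleftrightarrow> sg b \<in> f A" if b: "b \<in> carrier G" "b \<noteq> \<one>" for b
  proof
    assume bA: "b \<in> A"
    show "sg b \<in> f A"
    proof (rule ccontr)
      assume nb: "sg b \<notin> f A"
      have sb: "sg b \<in> carrier G" using sg_closed b by auto
      have "f A <#> ymx (sg b) (f A) = carrier G - {sg b}" using ymx_mult fA sb nb by blast
      moreover obtain Y where Y: "Y \<in> PP" "f Y = ymx (sg b) (f A)" using f_surj[OF ymx_PP[OF fA(1) sb nb]] by blast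
      ultimately have "f (A <#> Y) = f (carrier G - {b})" using f_mult[OF A(1) Y(1)] sg_coatom[OF b] by simp
      moreover have "carrier G - {b} \<in> PP" using b by auto
      ultimately have "A <#> Y = carrier G - {b}" using f_inj[OF sm_PP[OF A(1) Y(1)]] by blast
      then have "b \<notin> A" using ymx_conv[of Y A b] Y A by auto
      then show False using bA by simp
    qed
  next
    assume sA: "sg b \<in> f A"
    show "b \<in> A"
    proof (rule ccontr)
      assume nb: "b \<notin> A"
      have "A <#> ymx b A = carrier G - {b}" using ymx_mult A b nb by blast
      then have "f (A <#> ymx b A) = carrier G - {sg b}" using sg_coatom[OF b] by simp
      then have "f A <#> f (ymx b A) = carrier G - {sg b}"
        using f_mult[OF A(1) ymx_PP[OF A(1) b(1) nb]] by simp
      moreover have "f (ymx b A) \<in> PP" using f_PP[OF ymx_PP[OF A(1) b(1) nb]] .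
      ultimately have "sg b \<notin> f A" using ymx_conv[of "f (ymx b A)" "f A" "sg b"] fA by auto
      then show False using sA by simp
    qed
  qed
  show ?thesis
  proof
    show "f A \<subseteq> sg ` A"
    proof
      fix w assume w: "w \<in> f A"
      then have wc: "w \<in> carrier G" using fA by auto
      then obtain b where b: "b \<in> carrier G" "sg b = w" using sg_surj by blast
      show "w \<in> sg ` A"
      proof (cases "b = \<one>")
        case True then show ?thesis using b A by (auto intro: image_eqI[of _ _ \<one>])
      next
        case False then show ?thesis using key b w by auto
      qed
    qed
    show "sg ` A \<subseteq> f A"
    proof
      fix w assume "w \<in> sg ` A"
      then obtain b where b: "b \<in> A" "w = sg b" by auto
      have bc: "b \<in> carrier G" using b A by auto
      show "w \<in> f A"
      proof (cases "b = \<one>")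
        case True then show ?thesis using b fA by simp
      next
        case False then show ?thesis using key bc b by auto
      qed
    qed
  qed
qed

end

context comm_group begin

lemma st2: assumes a: "a \<in> carrier G" "a \<otimes> a \<noteq> \<one>" shows "st {\<one>, a}"
proof (intro ballI impI)
  fix s assume s: "s \<in> carrier G" "\<forall>x\<in>{\<one>, a}. x \<otimes> s \<in> {\<one>, a}"
  have a1: "a \<noteq> \<one>" using a by auto
  have "\<one> \<otimes> s \<in> {\<one>, a}" using s(2) by blast
  then have sA: "s \<in> {\<one>, a}" using s(1) by simp
  have as: "a \<otimes> s \<in> {\<one>, a}" using s(2) by blast
  show "s = \<one>"
  proof (rule ccontr)
    assume "s \<noteq> \<one>"
    then have "s = a" using sA by auto
    then have "a \<otimes> a = \<one> \<or> a \<otimes> a = a" using as by auto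
    then show False using a a1 by auto
  qed
qed

lemma st3:
  assumes t: "t \<in> carrier G" "t \<noteq> \<one>" "t \<otimes> t = \<one>" and c: "c \<in> carrier G" "c \<noteq> \<one>" "c \<noteq> t"
  shows "st {\<one>, t, c}"
proof (intro ballI impI)
  fix s assume s: "s \<in> carrier G" "\<forall>x\<in>{\<one>, t, c}. x \<otimes> s \<in> {\<one>, t, c}"
  have it: "inv t = t" using t inv_equality[of t t] by simp
  have "\<one> \<otimes> s \<in> {\<one>, t, c}" using s(2) by blast
  then have sA: "s \<in> {\<one>, t, c}" using s(1) by simp
  have ts: "t \<otimes> s \<in> {\<one>, t, c}" and cs: "c \<otimes> s \<in> {\<one>, t, c}" using s(2) by blast+
  show "s = \<one>"
  proof (rule ccontr)
    assume s1: "s \<noteq> \<one>"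
    show False
    proof (cases "s = t")
      case True
      then have "c \<otimes> t \<in> {\<one>, t, c}" using cs by simp
      moreover have "c \<otimes> t \<noteq> \<one>"
      proof
        assume "c \<otimes> t = \<one>"
        then have "inv t = c" using inv_equality[of c t] t c by simp
        then show False using it c by simp
      qed
      moreover have "c \<otimes> t \<noteq> t" using c t by simp
      moreover have "c \<otimes> t \<noteq> c" using c t by simp
      ultimately show False by blast
    next
      case False
      then have sc: "s = c" using sA s1 by auto
      then have "t \<otimes> c \<in> {\<one>, t, c}" using ts by simp
      moreover have "t \<otimes> c \<noteq> \<one>"
      proof
        assume "t \<otimes> c = \<one>"
        then have "inv c = t" using inv_equality[of t c] t c by simp
        then have "c = inv t" using c t by (metis inv_inv)
        then show False using it c by simp
      qed
      moreover have "t \<otimes> c \<noteq> t" using c t by simp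
      moreover have "t \<otimes> c \<noteq> c" using c t by simp
      ultimately show False by blast
    qed
  qed
qed

lemma setc_img: "{p \<otimes> inv x | x. x \<in> A} = (\<lambda>x. p \<otimes> inv x) ` A"
  by (auto simp: image_def)

lemma outside1:
  assumes "finite (carrier G)" "length xs < card (carrier G)"
  shows "\<exists>c\<in>carrier G. c \<notin> set xs"
proof (rule ccontr)
  assume "\<not> ?thesis"
  then have "carrier G \<subseteq> set xs" by blast
  then have "card (carrier G) \<le> card (set xs)" by (simp add: card_mono)
  also have "\<dots> \<le> length xs" by (rule card_length)
  finally show False using assms by simp
qed

lemma outside2:
  assumes "finite (carrier G)" "length xs + 2 \<le> card (carrier G)"
  shows "\<exists>c1\<in>carrier G. \<exists>c2\<in>carrier G. c1 \<notin> set xs \<and> c2 \<notin> set xs \<and> c1 \<noteq> c2"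
proof -
  obtain c1 where c1: "c1 \<in> carrier G" "c1 \<notin> set xs" using outside1[of xs] assms by auto
  obtain c2 where c2: "c2 \<in> carrier G" "c2 \<notin> set (c1 # xs)" using outside1[of "c1 # xs"] assms by auto
  show ?thesis using c1 c2 by auto
qed

end

context rpm_aut begin

lemma f_le_tr:
  assumes A: "A \<in> PP" and B: "B \<in> PP"
  shows "le_tr (f B) (f A) \<longleftrightarrow> le_tr B A"
proof
  assume h: "le_tr (f B) (f A)"
  show "le_tr B A" unfolding le_tr_def
  proof (intro ballI impI notI)
    fix C assume C: "C \<in> PP" "A <#> C \<noteq> carrier G" and BC: "B <#> C = carrier G"
    have "f (A <#> C) \<noteq> carrier G" using f_ne_G[OF sm_PP[OF A C(1)] C(2)] .
    then have "f A <#> f C \<noteq> carrier G" using f_mult[OF A C(1)] by simp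
    then have "f B <#> f C \<noteq> carrier G" using h f_PP[OF C(1)] unfolding le_tr_def by blast
    moreover have "f B <#> f C = carrier G" using f_mult[OF B C(1)] BC f_G by simp
    ultimately show False by simp
  qed
next
  assume h: "le_tr B A"
  show "le_tr (f B) (f A)" unfolding le_tr_def
  proof (intro ballI impI notI)
    fix C' assume C': "C' \<in> PP" "f A <#> C' \<noteq> carrier G" and BC: "f B <#> C' = carrier G"
    obtain C where C: "C \<in> PP" "f C = C'" using f_surj[OF C'(1)] by blast
    have "A <#> C \<noteq> carrier G" using C'(2) f_mult[OF A C(1)] C(2) f_G by auto
    then have "B <#> C \<noteq> carrier G" using h C(1) unfolding le_tr_def by blast
    then have "f (B <#> C) \<noteq> carrier G" using f_ne_G[OF sm_PP[OF B C(1)]] by blast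
    then show False using f_mult[OF B C(1)] C(2) BC by simp
  qed
qed

lemma Rgen:
  assumes A: "A \<in> PP" "st A" and p: "p \<in> carrier G" "p \<notin> A" and a: "a \<in> A"
  shows "inv (sg a) \<otimes> sg p \<in> sg ` {p \<otimes> inv x | x. x \<in> A}"
proof -
  let ?Y = "ymx p A"
  have Y: "?Y \<in> PP" using ymx_PP[OF A(1) p] .
  have stY: "st ?Y" using ymx_st[OF fin A p] .
  have fA: "f A = sg ` A" using f_st_img[OF A] .
  have fY: "f ?Y = sg ` ?Y" using f_st_img[OF Y stY] .
  have p1: "p \<noteq> \<one>" using p A by auto
  have "f (A <#> ?Y) = carrier G - {sg p}" using ymx_mult[OF A p] sg_coatom[OF p(1) p1] by simp
  then have prod: "sg ` A <#> sg ` ?Y = carrier G - {sg p}" using f_mult[OF A(1) Y] fA fY by simp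
  have ac: "a \<in> carrier G" using a A by auto
  have sa: "sg a \<in> carrier G" using sg_closed[OF ac] .
  have sp: "sg p \<in> carrier G" using sg_closed[OF p(1)] .
  let ?y = "inv (sg a) \<otimes> sg p"
  have yc: "?y \<in> carrier G" using sa sp by simp
  have ny: "?y \<notin> sg ` ?Y"
  proof
    assume "?y \<in> sg ` ?Y"
    moreover have "sg a \<in> sg ` A" using a by blast
    ultimately have "sg a \<otimes> ?y \<in> sg ` A <#> sg ` ?Y" by (intro sm_mem)
    moreover have "sg a \<otimes> ?y = sg p" using sa sp by simp
    ultimately show False using prod by auto
  qed
  obtain z where z: "z \<in> carrier G" "sg z = ?y" using sg_surj[OF yc] by blast
  have "z \<notin> ?Y"
  proof
    assume "z \<in> ?Y"
    then have "sg z \<in> sg ` ?Y" by (rule imageI)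
    then show False using z(2) ny by simp
  qed
  then have "z \<in> {p \<otimes> inv x | x. x \<in> A}" using z(1) unfolding ymx_def by blast
  then have "sg z \<in> sg ` {p \<otimes> inv x | x. x \<in> A}" by (rule imageI)
  then show ?thesis using z(2) by simp
qed

lemma R1:
  assumes a: "a \<in> carrier G" "a \<otimes> a \<noteq> \<one>" and p: "p \<in> carrier G" "p \<noteq> \<one>" "p \<noteq> a"
  shows "sg (p \<otimes> inv a) = sg p \<otimes> inv (sg a)"
proof -
  have a1: "a \<noteq> \<one>" using a by auto
  let ?A = "{\<one>, a}"
  have A: "?A \<in> PP" using a by auto
  have pA: "p \<notin> ?A" using p by auto
  have "inv (sg a) \<otimes> sg p \<in> sg ` {p \<otimes> inv x | x. x \<in> ?A}"
    using Rgen[OF A st2[OF a] p(1) pA, of a] by simp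
  moreover have "{p \<otimes> inv x | x. x \<in> ?A} = (\<lambda>x. p \<otimes> inv x) ` ?A" by (rule setc_img)
  moreover have "(\<lambda>x. p \<otimes> inv x) ` ?A = {p, p \<otimes> inv a}" using p by simp
  ultimately have h: "inv (sg a) \<otimes> sg p = sg p \<or> inv (sg a) \<otimes> sg p = sg (p \<otimes> inv a)" by auto
  have sa: "sg a \<in> carrier G" "sg a \<noteq> \<one>" using sg_closed[OF a(1)] sg_is_one[OF a(1)] a1 by auto
  have sp: "sg p \<in> carrier G" using sg_closed[OF p(1)] .
  have "inv (sg a) \<otimes> sg p \<noteq> sg p" using sa sp by simp
  then have "sg (p \<otimes> inv a) = inv (sg a) \<otimes> sg p" using h by auto
  then show ?thesis using sa sp by (simp add: m_comm)
qed

lemma sqr: assumes a: "a \<in> carrier G" "a \<otimes> a \<noteq> \<one>" shows "sg (a \<otimes> a) = sg a \<otimes> sg a"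
proof -
  have a1: "a \<noteq> \<one>" using a by auto
  have aa: "a \<otimes> a \<noteq> a" using a a1 by simp
  have "sg (a \<otimes> a \<otimes> inv a) = sg (a \<otimes> a) \<otimes> inv (sg a)" using R1[OF a _ a(2) aa] a by simp
  then have "sg a = sg (a \<otimes> a) \<otimes> inv (sg a)" using a by simp
  then show ?thesis using inv_solve_right[of "sg a" "sg (a \<otimes> a)" "sg a"] sg_closed a by simp
qed

lemma sinv: assumes a: "a \<in> carrier G" "a \<otimes> a \<noteq> \<one>" shows "sg (inv a) = inv (sg a)"
proof -
  have a1: "a \<noteq> \<one>" using a by auto
  have ia: "inv a \<in> carrier G" "inv a \<otimes> inv a \<noteq> \<one>" using a by (auto simp: inv_mult[symmetric])
  have ne: "a \<noteq> inv a"
  proof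
    assume "a = inv a"
    then have "a \<otimes> a = a \<otimes> inv a" by simp
    then show False using a by simp
  qed
  have "sg (a \<otimes> inv (inv a)) = sg a \<otimes> inv (sg (inv a))" using R1[OF ia a(1) a1 ne] .
  then have "sg a \<otimes> sg a = sg a \<otimes> inv (sg (inv a))" using a sqr[OF a] by simp
  then have "sg a = inv (sg (inv a))" using sg_closed a ia by simp
  then show ?thesis using sg_closed ia by simp
qed

lemma sdiv: assumes a: "a \<in> carrier G" "a \<otimes> a \<noteq> \<one>" and p: "p \<in> carrier G"
  shows "sg (p \<otimes> inv a) = sg p \<otimes> inv (sg a)"
proof (cases "p = \<one>")
  case True then show ?thesis using sinv[OF a] a sg_closed by simp
next
  case False
  show ?thesis
  proof (cases "p = a")
    case True then show ?thesis using a sg_closed by simp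
  next
    case False
    then show ?thesis using R1[OF a p] \<open>p \<noteq> \<one>\<close> by simp
  qed
qed

lemma smul: assumes a: "a \<in> carrier G" "a \<otimes> a \<noteq> \<one>" and p: "p \<in> carrier G"
  shows "sg (p \<otimes> a) = sg p \<otimes> sg a"
proof -
  have ia: "inv a \<in> carrier G" "inv a \<otimes> inv a \<noteq> \<one>" using a by (auto simp: inv_mult[symmetric])
  have "sg (p \<otimes> inv (inv a)) = sg p \<otimes> inv (sg (inv a))" using sdiv[OF ia p] .
  then show ?thesis using a sinv[OF a] sg_closed by simp
qed

lemma hom_I:
  assumes a0: "a0 \<in> carrier G" "a0 \<otimes> a0 \<noteq> \<one>" and xy: "x \<in> carrier G" "y \<in> carrier G"
  shows "sg (x \<otimes> y) = sg x \<otimes> sg y"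
proof (cases "y \<otimes> y = \<one>")
  case False show ?thesis by (rule smul[OF xy(2) False xy(1)])
next
  case True
  let ?b = "y \<otimes> a0"
  have bc: "?b \<in> carrier G" using xy a0 by simp
  have "?b \<otimes> ?b = (y \<otimes> y) \<otimes> (a0 \<otimes> a0)" using xy a0 by (simp add: m_ac)
  then have bb: "?b \<otimes> ?b \<noteq> \<one>" using True a0 xy by simp
  have e: "x \<otimes> y = (x \<otimes> ?b) \<otimes> inv a0" using xy a0 by (simp add: m_assoc)
  have "sg (x \<otimes> y) = sg (x \<otimes> ?b) \<otimes> inv (sg a0)" using e sdiv[OF a0 m_closed[OF xy(1) bc]] by simp
  also have "\<dots> = sg x \<otimes> sg ?b \<otimes> inv (sg a0)" using smul[OF bc bb xy(1)] by simp
  also have "\<dots> = sg x \<otimes> (sg y \<otimes> sg a0) \<otimes> inv (sg a0)" using smul[OF a0 xy(2)] by simp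
  also have "\<dots> = sg x \<otimes> sg y" using sg_closed xy a0 by (simp add: m_assoc)
  finally show ?thesis .
qed

lemma hom_II:
  assumes ch2: "\<forall>a\<in>carrier G. a \<otimes> a = \<one>" and c5: "5 \<le> card (carrier G)"
    and xy: "x \<in> carrier G" "y \<in> carrier G"
  shows "sg (x \<otimes> y) = sg x \<otimes> sg y"
proof -
  have iv: "inv z = z" if "z \<in> carrier G" for z using that ch2 inv_equality[of z z] by simp
  have main: "sg (p \<otimes> a) = sg p \<otimes> sg a"
    if a: "a \<in> carrier G" "a \<noteq> \<one>" and p: "p \<in> carrier G" "p \<noteq> \<one>" "p \<noteq> a" for a p
  proof -
    have sa: "sg a \<in> carrier G" "sg a \<noteq> \<one>" using sg_closed[OF a(1)] sg_is_one[OF a(1)] a by auto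
    have sp: "sg p \<in> carrier G" using sg_closed[OF p(1)] .
    have alt: "sg (p \<otimes> a) = sg a \<otimes> sg p \<or> sg (p \<otimes> c) = sg a \<otimes> sg p"
      if c: "c \<in> carrier G" "c \<noteq> \<one>" "c \<noteq> a" "c \<noteq> p" for c
    proof -
      let ?A = "{\<one>, a, c}"
      have A: "?A \<in> PP" using a c by auto
      have stA: "st ?A" using st3[OF a(1) a(2) _ c(1) c(2) c(3)] ch2 a by blast
      have pA: "p \<notin> ?A" using p c by auto
      have "inv (sg a) \<otimes> sg p \<in> sg ` {p \<otimes> inv x | x. x \<in> ?A}"
        using Rgen[OF A stA p(1) pA, of a] by simp
      moreover have "{p \<otimes> inv x | x. x \<in> ?A} = (\<lambda>x. p \<otimes> inv x) ` ?A" by (rule setc_img)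
      moreover have "(\<lambda>x. p \<otimes> inv x) ` ?A = {p, p \<otimes> a, p \<otimes> c}" using p a c iv by simp
      moreover have "inv (sg a) = sg a" using iv sa by simp
      ultimately have h: "sg a \<otimes> sg p \<in> {sg p, sg (p \<otimes> a), sg (p \<otimes> c)}" by simp
      have "sg a \<otimes> sg p \<noteq> sg p" using sa sp by simp
      then show ?thesis using h by auto
    qed
    obtain c1 c2 where cc: "c1 \<in> carrier G" "c2 \<in> carrier G" "c1 \<notin> set [\<one>, a, p]" "c2 \<notin> set [\<one>, a, p]" "c1 \<noteq> c2"
      using outside2[OF fin, of "[\<one>, a, p]"] c5 by auto
    show ?thesis
    proof (rule ccontr)
      assume ne: "sg (p \<otimes> a) \<noteq> sg p \<otimes> sg a"
      then have ne': "sg (p \<otimes> a) \<noteq> sg a \<otimes> sg p" using sa sp m_comm by simp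
      have "sg (p \<otimes> c1) = sg a \<otimes> sg p" using alt[of c1] cc ne' by auto
      moreover have "sg (p \<otimes> c2) = sg a \<otimes> sg p" using alt[of c2] cc ne' by auto
      ultimately have "sg (p \<otimes> c1) = sg (p \<otimes> c2)" by simp
      then have "p \<otimes> c1 = p \<otimes> c2" using sg_inj cc p unfolding inj_on_def by simp
      then show False using cc p by simp
    qed
  qed
  show ?thesis
  proof (cases "x = \<one> \<or> y = \<one>")
    case True then show ?thesis
    proof (elim disjE)
      assume "x = \<one>" then show ?thesis using sg_closed[OF xy(2)] xy(2) by simp
    next
      assume "y = \<one>" then show ?thesis using sg_closed[OF xy(1)] xy(1) by simp
    qed
  next
    case False
    show ?thesis
    proof (cases "x = y")
      case True
      have "x \<otimes> x = \<one>" "sg x \<otimes> sg x = \<one>" using ch2 xy(1) sg_closed[OF xy(1)] by auto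
      then show ?thesis using True by simp
    next
      case False
      then show ?thesis using main[of y x] xy \<open>\<not> (x = \<one> \<or> y = \<one>)\<close> by auto
    qed
  qed
qed

definition "NK \<longleftrightarrow> (\<forall>a\<in>carrier G. \<forall>b\<in>carrier G. a \<noteq> \<one> \<longrightarrow> b \<noteq> \<one> \<longrightarrow> a \<otimes> a = \<one> \<longrightarrow> b \<otimes> b = \<one> \<longrightarrow> a \<noteq> b \<longrightarrow> 5 \<le> card (carrier G))"

lemma sg_hom:
  assumes nk: NK and xy: "x \<in> carrier G" "y \<in> carrier G"
  shows "sg (x \<otimes> y) = sg x \<otimes> sg y"
proof (cases "\<exists>a0\<in>carrier G. a0 \<otimes> a0 \<noteq> \<one>")
  case True then show ?thesis using hom_I xy by blast
next
  case False
  then have ch2: "\<forall>a\<in>carrier G. a \<otimes> a = \<one>" by blast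
  show ?thesis
  proof (cases "5 \<le> card (carrier G)")
    case True show ?thesis by (rule hom_II[OF ch2 True xy])
  next
    case c5: False
    have id: "sg z = z" if z: "z \<in> carrier G" for z
    proof (rule ccontr)
      assume ne: "sg z \<noteq> z"
      then have z1: "z \<noteq> \<one>" by auto
      have sz: "sg z \<in> carrier G" "sg z \<noteq> \<one>" using sg_closed[OF z] sg_is_one[OF z] z1 by auto
      have zz: "z \<otimes> z = \<one>" "sg z \<otimes> sg z = \<one>" using ch2 z sz(1) by auto
      have "z \<noteq> sg z" using ne by simp
      then have "5 \<le> card (carrier G)" using nk z sz z1 zz unfolding NK_def by blast
      then show False using c5 by simp
    qed
    show ?thesis using id xy by simp
  qed
qed

end

context rpm_aut begin

lemma sg_injD: "u \<in> carrier G \<Longrightarrow> v \<in> carrier G \<Longrightarrow> sg u = sg v \<Longrightarrow> u = v"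
  using sg_inj unfolding inj_on_def by blast

lemma fE:
  assumes nk: NK and t: "t \<in> carrier G" "t \<noteq> \<one>" "t \<otimes> t = \<one>"
  shows "f {\<one>, t} = {\<one>, sg t}"
proof -
  let ?E = "{\<one>, t}"
  have E: "?E \<in> PP" using t by auto
  let ?K = "f ?E"
  have K: "?K \<in> PP" using f_PP[OF E] .
  have stc: "sg t \<in> carrier G" "sg t \<noteq> \<one>" using sg_closed[OF t(1)] sg_is_one[OF t(1)] t(2) by auto
  have it: "inv t = t" using t inv_equality[of t t] by simp
  show ?thesis
  proof (cases "?E = carrier G")
    case True
    then have "sg t \<in> ?E" using stc by simp
    then have "sg t = t" using stc by simp
    moreover have "?K = carrier G" using True f_G by simp
    ultimately show ?thesis using True by simp
  next
    case False
    have "?K \<noteq> {\<one>}" using f_ne_one[OF E] t by auto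
    then obtain k where k: "k \<in> ?K" "k \<noteq> \<one>" using K by auto
    have kc: "k \<in> carrier G" using k K by auto
    have K2: "?K = {\<one>, k}"
    proof (rule ccontr)
      assume "?K \<noteq> {\<one>, k}"
      then obtain k' where k': "k' \<in> ?K" "k' \<noteq> \<one>" "k' \<noteq> k" using K k by auto
      let ?Y = "{\<one>, k}"
      have Y: "?Y \<in> PP" using kc by auto
      have le1: "le_tr ?Y ?K" using le_tr_sub[of ?K ?Y] K k by auto
      obtain Y0 where Y0: "Y0 \<in> PP" "f Y0 = ?Y" using f_surj[OF Y] by blast
      have "le_tr Y0 ?E" using f_le_tr[OF E Y0(1)] le1 Y0(2) by simp
      then obtain s where s: "s \<in> carrier G" "\<forall>y\<in>Y0. \<exists>x\<in>?E. y = x \<otimes> s"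
        using le_tr_tr[OF _ E Y0(1) False] by blast
      have one0: "\<one> \<in> Y0" using Y0(1) by simp
      then obtain x1 where x1: "x1 \<in> ?E" "\<one> = x1 \<otimes> s" using s(2) by blast
      have s1: "s = \<one> \<or> s = t"
      proof (cases "x1 = \<one>")
        case True
        then have "\<one> = \<one> \<otimes> s" using x1(2) by simp
        then show ?thesis using s(1) by simp
      next
        case False
        then have "t \<otimes> s = \<one>" using x1 by auto
        then have "s \<otimes> t = \<one>" using t(1) s(1) m_comm by simp
        then have "inv t = s" using inv_equality[of s t] t(1) s(1) by simp
        then show ?thesis using it by simp
      qed
      have Y0s: "Y0 \<subseteq> ?E"
      proof
        fix y assume y: "y \<in> Y0"
        then obtain x where x: "x \<in> ?E" "y = x \<otimes> s" using s(2) by blast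
        show "y \<in> ?E" using s1 x t by auto
      qed
      have "Y0 = {\<one>} \<or> Y0 = ?E" using Y0s one0 by auto
      then show False
      proof
        assume "Y0 = {\<one>}"
        then have "?Y = {\<one>}" using Y0(2) f_one by simp
        then show False using k(2) by auto
      next
        assume "Y0 = ?E"
        then have "?Y = ?K" using Y0(2) by simp
        then show False using k' by auto
      qed
    qed
    have EE: "?E <#> ?E = ?E"
    proof
      show "?E <#> ?E \<subseteq> ?E"
      proof
        fix w assume "w \<in> ?E <#> ?E"
        then obtain x y where xy: "x \<in> ?E" "y \<in> ?E" "w = x \<otimes> y" by (rule sm_E)
        then show "w \<in> ?E" using t by auto
      qed
      show "?E \<subseteq> ?E <#> ?E" using sm_sup1[of ?E ?E] t by auto
    qed
    have "?K <#> ?K = ?K" using f_mult[OF E E] EE by simp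
    moreover have "k \<otimes> k \<in> ?K <#> ?K" using k(1) k(1) by (rule sm_mem)
    ultimately have "k \<otimes> k \<in> {\<one>, k}" using K2 by simp
    moreover have "k \<otimes> k \<noteq> k" using kc k(2) by simp
    ultimately have kk: "k \<otimes> k = \<one>" by blast
    obtain k0 where k0: "k0 \<in> carrier G" "sg k0 = k" using sg_surj[OF kc] by blast
    have k01: "k0 \<noteq> \<one>" using k0 k(2) by auto
    have k0k0: "k0 \<otimes> k0 = \<one>"
    proof -
      have "sg (k0 \<otimes> k0) = sg \<one>" using sg_hom[OF nk k0(1) k0(1)] k0(2) kk by simp
      then show ?thesis using sg_injD[OF m_closed[OF k0(1) k0(1)] one_closed] by simp
    qed
    have "k0 = t"
    proof (rule ccontr)
      assume ne: "k0 \<noteq> t"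
      have c5: "5 \<le> card (carrier G)" using nk k0(1) t(1) k01 t(2) k0k0 t(3) ne unfolding NK_def by blast
      obtain c where c: "c \<in> carrier G" "c \<notin> set [\<one>, t, k0, t \<otimes> k0]"
        using outside1[OF fin, of "[\<one>, t, k0, t \<otimes> k0]"] c5 by auto
      have cne: "c \<noteq> \<one>" "c \<noteq> t" "c \<noteq> k0" "c \<noteq> t \<otimes> k0" using c(2) by auto
      let ?A = "{\<one>, t, c}"
      have A: "?A \<in> PP" using t c by auto
      have stA: "st ?A" using st3[OF t c(1) cne(1) cne(2)] .
      have fA: "f ?A = {\<one>, sg t, sg c}" using f_st_img[OF A stA] by simp
      have "le_tr ?E ?A" using le_tr_sub[of ?A ?E] t c by auto
      then have le2: "le_tr ?K (f ?A)" using f_le_tr[OF A E] by simp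
      have "k0 \<notin> ?A" using k01 ne cne by auto
      then have "?A \<noteq> carrier G" using k0(1) by auto
      then have fAG: "f ?A \<noteq> carrier G" using f_ne_G[OF A] by blast
      obtain s where s: "s \<in> carrier G" "\<forall>y\<in>?K. \<exists>x\<in>f ?A. y = x \<otimes> s"
        using le_tr_tr[OF le2 f_PP[OF A] K fAG] by blast
      obtain x1 where x1: "x1 \<in> f ?A" "\<one> = x1 \<otimes> s" using s(2) K2 by auto
      obtain x2 where x2: "x2 \<in> f ?A" "k = x2 \<otimes> s" using s(2) K2 by auto
      have fAc: "f ?A \<subseteq> carrier G" using f_PP[OF A] by simp
      have x1c: "x1 \<in> carrier G" "x2 \<in> carrier G" using x1 x2 fAc by auto
      have "s \<otimes> x1 = \<one>" using x1(2) x1c s(1) m_comm by simp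
      then have sx: "s = inv x1" using inv_equality[of s x1] x1c s(1) by simp
      have kx: "k \<otimes> x1 = x2" using x2(2) sx x1c by simp
      let ?T = "sg t" and ?C = "sg c"
      have Tc: "?T \<in> carrier G" "?C \<in> carrier G" using sg_closed t c by auto
      have TT: "?T \<otimes> ?T = \<one>" using sg_hom[OF nk t(1) t(1)] t(3) by simp
      have iT: "inv ?T = ?T" using TT inv_equality[of ?T ?T] Tc by simp
      have ik: "inv k = k" using kk inv_equality[of k k] kc by simp
      have kT: "k \<otimes> ?T = sg (t \<otimes> k0)" using sg_hom[OF nk t(1) k0(1)] k0(2) kc Tc m_comm by simp
      have tk: "t \<otimes> k0 \<in> carrier G" using t k0 by simp
      have x1s: "x1 = \<one> \<or> x1 = ?T \<or> x1 = ?C" using x1(1) fA by auto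
      have x2s: "x2 = \<one> \<or> x2 = ?T \<or> x2 = ?C" using x2(1) fA by auto
      show False
      proof -
        { assume a1: "x1 = \<one>"
          then have "k = x2" using kx kc by simp
          then have False
            using x2s k(2) ne cne sg_injD[OF k0(1) t(1)] sg_injD[OF k0(1) c(1)] k0(2) by auto }
        moreover
        { assume a1: "x1 = ?T"
          then have kx': "k \<otimes> ?T = x2" using kx by simp
          { assume "x2 = \<one>"
            then have "k \<otimes> ?T = \<one>" using kx' by simp
            then have "inv ?T = k" using inv_equality[of k ?T] kc Tc by simp
            then have "sg k0 = sg t" using iT k0(2) by simp
            then have False using sg_injD[OF k0(1) t(1)] ne by simp }
          moreover
          { assume "x2 = ?T"
            then have "k \<otimes> ?T = ?T" using kx' by simp
            then have False using kc Tc k(2) by simp }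
          moreover
          { assume "x2 = ?C"
            then have "sg (t \<otimes> k0) = sg c" using kx' kT by simp
            then have False using sg_injD[OF tk c(1)] cne(4) by simp }
          ultimately have False using x2s by blast }
        moreover
        { assume a1: "x1 = ?C"
          then have kx': "k \<otimes> ?C = x2" using kx by simp
          { assume "x2 = \<one>"
            then have "k \<otimes> ?C = \<one>" using kx' by simp
            then have "?C \<otimes> k = \<one>" using kc Tc m_comm by simp
            then have "inv k = ?C" using inv_equality[of ?C k] kc Tc by simp
            then have "sg c = sg k0" using ik k0(2) by simp
            then have False using sg_injD[OF c(1) k0(1)] cne(3) by simp }
          moreover
          { assume "x2 = ?T"
            then have "k \<otimes> ?C = ?T" using kx' by simp
            then have "?C = inv k \<otimes> ?T" using inv_solve_left[of ?C k ?T] kc Tc by simp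
            then have "?C = k \<otimes> ?T" using ik by simp
            then have "sg c = sg (t \<otimes> k0)" using kT by simp
            then have False using sg_injD[OF c(1) tk] cne(4) by simp }
          moreover
          { assume "x2 = ?C"
            then have "k \<otimes> ?C = ?C" using kx' by simp
            then have False using kc Tc k(2) by simp }
          ultimately have False using x2s by blast }
        ultimately show False using x1s by blast
      qed
    qed
    then show ?thesis using K2 k0 by simp
  qed
qed

lemma f_img_all:
  assumes nk: NK
  shows "A \<in> PP \<Longrightarrow> f A = sg ` A"
proof (induction "card A" arbitrary: A rule: less_induct)
  case less
  have Ap: "A \<subseteq> carrier G" "\<one> \<in> A" using less.prems by auto
  show ?case
  proof (cases "st A")
    case True then show ?thesis using f_st_img[OF less.prems] by blast
  next
    case False
    then obtain t where t: "t \<in> carrier G" "\<forall>x\<in>A. x \<otimes> t \<in> A" "t \<noteq> \<one>" by blast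
    have "\<one> \<otimes> t \<in> A" using t(2) Ap(2) by blast
    then have tA: "t \<in> A" using t(1) by simp
    let ?A0 = "A - {t}"
    have A0: "?A0 \<in> PP" using Ap t(3) by auto
    have E: "{\<one>, t} \<in> PP" using t by auto
    have dec: "?A0 <#> {\<one>, t} = A"
    proof
      show "?A0 <#> {\<one>, t} \<subseteq> A"
      proof
        fix w assume "w \<in> ?A0 <#> {\<one>, t}"
        then obtain x y where xy: "x \<in> ?A0" "y \<in> {\<one>, t}" "w = x \<otimes> y" by (rule sm_E)
        have xc: "x \<in> carrier G" using xy Ap by auto
        show "w \<in> A" using xy xc t(2) by auto
      qed
      show "A \<subseteq> ?A0 <#> {\<one>, t}"
      proof
        fix w assume w: "w \<in> A"
        have wc: "w \<in> carrier G" using w Ap by auto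
        show "w \<in> ?A0 <#> {\<one>, t}"
        proof (cases "w = t")
          case True
          have "\<one> \<otimes> t \<in> ?A0 <#> {\<one>, t}" using Ap t(3) by (intro sm_mem) auto
          then show ?thesis using True t(1) by simp
        next
          case False
          have "w \<otimes> \<one> \<in> ?A0 <#> {\<one>, t}" using w False by (intro sm_mem) auto
          then show ?thesis using wc by simp
        qed
      qed
    qed
    have fA: "finite A" using Ap fin finite_subset by blast
    have "card ?A0 < card A" using card_Diff1_less[OF fA tA] .
    then have IH: "f ?A0 = sg ` ?A0" using less.hyps A0 by blast
    have fE': "f {\<one>, t} = sg ` {\<one>, t}"
    proof (cases "t \<otimes> t = \<one>")
      case True then show ?thesis using fE[OF nk t(1) t(3) True] by simp
    next
      case False show ?thesis by (rule f_st_img[OF E st2[OF t(1) False]])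
    qed
    have hom: "\<forall>x\<in>carrier G. \<forall>y\<in>carrier G. sg (x \<otimes> y) = sg x \<otimes> sg y" using sg_hom[OF nk] by blast
    have "f A = f ?A0 <#> f {\<one>, t}" using dec f_mult[OF A0 E] by simp
    also have "\<dots> = sg ` ?A0 <#> sg ` {\<one>, t}" using IH fE' by simp
    also have "\<dots> = sg ` (?A0 <#> {\<one>, t})" using img_sm[OF hom, of ?A0 "{\<one>, t}"] Ap t by auto
    also have "\<dots> = sg ` A" using dec by simp
    finally show ?thesis .
  qed
qed

end

context comm_group begin

lemma klein:
  assumes fin: "finite (carrier G)" and c4: "card (carrier G) \<le> 4"
    and a: "a \<in> carrier G" "a \<noteq> \<one>" "a \<otimes> a = \<one>"
    and b: "b \<in> carrier G" "b \<noteq> \<one>" "b \<otimes> b = \<one>" and ab: "a \<noteq> b"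
  shows "G \<cong> DirProd (integer_mod_group 2) (integer_mod_group 2)"
proof -
  let ?K = "DirProd (integer_mod_group 2) (integer_mod_group 2)"
  have ia: "inv a = a" using a inv_equality[of a a] by simp
  have ab1: "a \<otimes> b \<noteq> \<one>"
  proof
    assume "a \<otimes> b = \<one>"
    then have "inv b = a" using inv_equality[of a b] a b by simp
    moreover have "inv b = b" using b inv_equality[of b b] by simp
    ultimately show False using ab by simp
  qed
  have aba: "a \<otimes> b \<noteq> a" using a b by simp
  have abb: "a \<otimes> b \<noteq> b" using a b by simp
  have sub: "{\<one>, a, b, a \<otimes> b} \<subseteq> carrier G" using a b by auto
  have c4': "card {\<one>, a, b, a \<otimes> b} = 4" using a b ab ab1 aba abb by auto
  have Gc: "{\<one>, a, b, a \<otimes> b} = carrier G" using card_seteq[OF fin sub] c4 c4' by simp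
  define \<phi> where "\<phi> = (\<lambda>p::int\<times>int. (if fst p = 1 then a else \<one>) \<otimes> (if snd p = 1 then b else \<one>))"
  have I2: "carrier (integer_mod_group 2) = {0, 1}" by (auto simp: carrier_integer_mod_group)
  have Kc: "carrier ?K = {0, 1} \<times> {0, 1}" using I2 by simp
  have aax: "a \<otimes> (a \<otimes> x) = x" if "x \<in> carrier G" for x using a that by (simp add: m_assoc[symmetric])
  have bbx: "b \<otimes> (b \<otimes> x) = x" if "x \<in> carrier G" for x using b that by (simp add: m_assoc[symmetric])
  have hom: "\<phi> \<in> hom ?K G"
  proof (rule homI)
    fix x assume "x \<in> carrier ?K"
    then show "\<phi> x \<in> carrier G" using a b unfolding \<phi>_def by auto
  next
    fix x y assume xy: "x \<in> carrier ?K" "y \<in> carrier ?K"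
    then obtain i j i' j' where ij: "x = (i, j)" "y = (i', j')" "i \<in> {0,1}" "j \<in> {0,1}" "i' \<in> {0,1}" "j' \<in> {0,1}"
      using Kc by auto
    show "\<phi> (x \<otimes>\<^bsub>?K\<^esub> y) = \<phi> x \<otimes> \<phi> y"
      using ij a b unfolding \<phi>_def by (auto simp: m_ac aax bbx)
  qed
  have v: "\<phi> (0,0) = \<one>" "\<phi> (1,0) = a" "\<phi> (0,1) = b" "\<phi> (1,1) = a \<otimes> b"
    unfolding \<phi>_def using a b by auto
  have img: "\<phi> ` carrier ?K = carrier G"
  proof
    show "\<phi> ` carrier ?K \<subseteq> carrier G" using hom unfolding hom_def by auto
    show "carrier G \<subseteq> \<phi> ` carrier ?K"
    proof
      fix w assume "w \<in> carrier G"
      then have "w \<in> {\<one>, a, b, a \<otimes> b}" using Gc by simp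
      then have "w \<in> {\<phi> (0,0), \<phi> (1,0), \<phi> (0,1), \<phi> (1,1)}" using v by simp
      then show "w \<in> \<phi> ` carrier ?K" using Kc by auto
    qed
  qed
  have cK: "card (carrier ?K) = 4" using Kc by (simp add: card_cartesian_product)
  have "inj_on \<phi> (carrier ?K)"
    by (rule eq_card_imp_inj_on) (use Kc img cK c4' Gc in auto)
  then have bj: "bij_betw \<phi> (carrier ?K) (carrier G)" using img unfolding bij_betw_def by blast
  have "?K \<cong> G" by (rule is_isoI[OF isoI[OF hom bj]])
  moreover have "group ?K" by (intro DirProd_group group_integer_mod_group)
  ultimately show ?thesis using group.iso_sym by blast
qed

end

lemma AG_carrier: "carrier (AutoGroup H) = auto H"
  by (simp add: AutoGroup_def BijGroup_def)

lemma AG_mult: "h1 \<in> auto H \<Longrightarrow> h2 \<in> auto H \<Longrightarrow> h1 \<otimes>\<^bsub>AutoGroup H\<^esub> h2 = compose (carrier H) h1 h2"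
  by (simp add: AutoGroup_def BijGroup_def auto_def)

theorem theorem3p7:
  fixes G :: "('a, 'b) monoid_scheme"
  assumes "comm_group G"
    and "finite (carrier G)"
    and "\<not> (G \<cong> DirProd (integer_mod_group 2) (integer_mod_group 2))"
  shows "AutoGroup (reduced_power_monoid G) \<cong> AutoGroup G"
proof -
  interpret comm_group G by fact
  let ?P = "reduced_power_monoid G"
  have fin: "finite (carrier G)" by fact
  have PC: "carrier ?P = PP" by (simp add: RPM_carrier)
  have finP: "finite PP" using fin by (auto intro: finite_subset[of _ "Pow (carrier G)"])
  have nk: "\<forall>a\<in>carrier G. \<forall>b\<in>carrier G. a \<noteq> \<one>\<^bsub>G\<^esub> \<longrightarrow> b \<noteq> \<one>\<^bsub>G\<^esub> \<longrightarrow> a \<otimes>\<^bsub>G\<^esub> a = \<one>\<^bsub>G\<^esub> \<longrightarrow> b \<otimes>\<^bsub>G\<^esub> b = \<one>\<^bsub>G\<^esub> \<longrightarrow> a \<noteq> b \<longrightarrow> 5 \<le> card (carrier G)"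
  proof (intro ballI impI)
    fix a b assume ab: "a \<in> carrier G" "b \<in> carrier G" "a \<noteq> \<one>\<^bsub>G\<^esub>" "b \<noteq> \<one>\<^bsub>G\<^esub>" "a \<otimes>\<^bsub>G\<^esub> a = \<one>\<^bsub>G\<^esub>" "b \<otimes>\<^bsub>G\<^esub> b = \<one>\<^bsub>G\<^esub>" "a \<noteq> b"
    show "5 \<le> card (carrier G)"
    proof (rule ccontr)
      assume "\<not> 5 \<le> card (carrier G)"
      then have "card (carrier G) \<le> 4" by simp
      then have "G \<cong> DirProd (integer_mod_group 2) (integer_mod_group 2)"
        using klein[OF fin _ ab(1) ab(3) ab(5) ab(2) ab(4) ab(6) ab(7)] by blast
      then show False using assms(3) by simp
    qed
  qed
  define \<Phi> :: "('a \<Rightarrow> 'a) \<Rightarrow> 'a set \<Rightarrow> 'a set" where "\<Phi> = (\<lambda>h. restrict (\<lambda>W. h ` W) (carrier ?P))"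
  have autoD: "h \<in> hom G G" "bij_betw h (carrier G) (carrier G)" "h \<in> extensional (carrier G)"
    "h \<one>\<^bsub>G\<^esub> = \<one>\<^bsub>G\<^esub>" "\<forall>x\<in>carrier G. \<forall>y\<in>carrier G. h (x \<otimes>\<^bsub>G\<^esub> y) = h x \<otimes>\<^bsub>G\<^esub> h y"
    if "h \<in> auto G" for h
  proof -
    show hh: "h \<in> hom G G" "bij_betw h (carrier G) (carrier G)" "h \<in> extensional (carrier G)"
      using that by (auto simp: auto_def Bij_def)
    show "h \<one>\<^bsub>G\<^esub> = \<one>\<^bsub>G\<^esub>" using hom_one[OF hh(1) is_group is_group] .
    show "\<forall>x\<in>carrier G. \<forall>y\<in>carrier G. h (x \<otimes>\<^bsub>G\<^esub> y) = h x \<otimes>\<^bsub>G\<^esub> h y" using hh(1) by (simp add: hom_def)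
  qed
  have Phi_img: "h ` W \<in> PP" if "h \<in> auto G" "W \<in> PP" for h W
  proof -
    have "h ` W \<subseteq> carrier G" using autoD(2)[OF that(1)] that(2) bij_betwE by blast
    moreover have "\<one>\<^bsub>G\<^esub> \<in> h ` W" using autoD(4)[OF that(1)] that(2) by (metis (mono_tags, lifting) image_eqI mem_Collect_eq)
    ultimately show ?thesis by simp
  qed
  have Phi_auto: "\<Phi> h \<in> auto ?P" if h: "h \<in> auto G" for h
  proof -
    have hom: "\<Phi> h \<in> hom ?P ?P"
    proof (rule homI)
      fix W assume "W \<in> carrier ?P"
      then show "\<Phi> h W \<in> carrier ?P" using Phi_img[OF h] PC unfolding \<Phi>_def by simp
    next
      fix W V assume WV: "W \<in> carrier ?P" "V \<in> carrier ?P"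
      have WV': "W \<in> PP" "V \<in> PP" using WV PC by auto
      have "W <#>\<^bsub>G\<^esub> V \<in> PP" using sm_PP[OF WV'] .
      then have "\<Phi> h (W \<otimes>\<^bsub>?P\<^esub> V) = h ` (W <#>\<^bsub>G\<^esub> V)" unfolding \<Phi>_def using PC by (simp add: RPM_mult)
      also have "\<dots> = h ` W <#>\<^bsub>G\<^esub> h ` V" using img_sm[OF autoD(5)[OF h]] WV' by auto
      also have "\<dots> = \<Phi> h W \<otimes>\<^bsub>?P\<^esub> \<Phi> h V" unfolding \<Phi>_def using WV PC by (simp add: RPM_mult)
      finally show "\<Phi> h (W \<otimes>\<^bsub>?P\<^esub> V) = \<Phi> h W \<otimes>\<^bsub>?P\<^esub> \<Phi> h V" .
    qed
    have injh: "inj_on h (carrier G)" using autoD(2)[OF h] by (simp add: bij_betw_def)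
    have inj: "inj_on (\<Phi> h) PP"
    proof (rule inj_onI)
      fix W V assume WV: "W \<in> PP" "V \<in> PP" "\<Phi> h W = \<Phi> h V"
      then have "h ` W = h ` V" unfolding \<Phi>_def using PC by simp
      then show "W = V" using inj_on_image_eq_iff[OF injh] WV by auto
    qed
    have sub: "\<Phi> h ` PP \<subseteq> PP" using Phi_img[OF h] PC unfolding \<Phi>_def by auto
    have "\<Phi> h ` PP = PP" using endo_inj_surj[OF finP sub inj] .
    then have "bij_betw (\<Phi> h) PP PP" using inj by (simp add: bij_betw_def)
    moreover have "\<Phi> h \<in> extensional (carrier ?P)" unfolding \<Phi>_def by simp
    ultimately have "\<Phi> h \<in> Bij (carrier ?P)" using PC by (simp add: Bij_def)
    then show ?thesis using hom by (simp add: auto_def)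
  qed
  have Phi_hom: "\<Phi> \<in> hom (AutoGroup G) (AutoGroup ?P)"
  proof (rule homI)
    fix h assume "h \<in> carrier (AutoGroup G)"
    then show "\<Phi> h \<in> carrier (AutoGroup ?P)" using Phi_auto by (simp add: AG_carrier)
  next
    fix h1 h2 assume hh: "h1 \<in> carrier (AutoGroup G)" "h2 \<in> carrier (AutoGroup G)"
    have h: "h1 \<in> auto G" "h2 \<in> auto G" using hh by (simp_all add: AG_carrier)
    have m1: "h1 \<otimes>\<^bsub>AutoGroup G\<^esub> h2 = compose (carrier G) h1 h2" using AG_mult[OF h] .
    have m2: "\<Phi> h1 \<otimes>\<^bsub>AutoGroup ?P\<^esub> \<Phi> h2 = compose (carrier ?P) (\<Phi> h1) (\<Phi> h2)"
      using AG_mult[OF Phi_auto[OF h(1)] Phi_auto[OF h(2)]] .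
    show "\<Phi> (h1 \<otimes>\<^bsub>AutoGroup G\<^esub> h2) = \<Phi> h1 \<otimes>\<^bsub>AutoGroup ?P\<^esub> \<Phi> h2"
      unfolding m1 m2
    proof (rule ext)
      fix W
      show "\<Phi> (compose (carrier G) h1 h2) W = compose (carrier ?P) (\<Phi> h1) (\<Phi> h2) W"
      proof (cases "W \<in> carrier ?P")
        case True
        then have W: "W \<in> PP" using PC by simp
        have "\<Phi> (compose (carrier G) h1 h2) W = compose (carrier G) h1 h2 ` W" unfolding \<Phi>_def using True by simp
        also have "\<dots> = h1 ` (h2 ` W)"
        proof -
          have "compose (carrier G) h1 h2 ` W = (\<lambda>x. h1 (h2 x)) ` W"
            using W by (intro image_cong) (auto simp: compose_eq)
          then show ?thesis by (simp add: image_image)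
        qed
        also have "\<dots> = \<Phi> h1 (\<Phi> h2 W)" unfolding \<Phi>_def using True Phi_img[OF h(2) W] PC by simp
        also have "\<dots> = compose (carrier ?P) (\<Phi> h1) (\<Phi> h2) W" using True by (simp add: compose_eq)
        finally show ?thesis .
      next
        case False
        then show ?thesis unfolding \<Phi>_def by (simp add: compose_def)
      qed
    qed
  qed
  have Phi_inj: "inj_on \<Phi> (auto G)"
  proof (rule inj_onI)
    fix h1 h2 assume hh: "h1 \<in> auto G" "h2 \<in> auto G" "\<Phi> h1 = \<Phi> h2"
    show "h1 = h2"
    proof (rule extensionalityI[OF autoD(3)[OF hh(1)] autoD(3)[OF hh(2)]])
      fix x assume x: "x \<in> carrier G"
      have E: "{\<one>\<^bsub>G\<^esub>, x} \<in> carrier ?P" using x PC by simp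
      have "\<Phi> h1 {\<one>\<^bsub>G\<^esub>, x} = \<Phi> h2 {\<one>\<^bsub>G\<^esub>, x}" using hh(3) by simp
      then have "h1 ` {\<one>\<^bsub>G\<^esub>, x} = h2 ` {\<one>\<^bsub>G\<^esub>, x}" unfolding \<Phi>_def using E by simp
      then have e: "{\<one>\<^bsub>G\<^esub>, h1 x} = {\<one>\<^bsub>G\<^esub>, h2 x}" using autoD(4)[OF hh(1)] autoD(4)[OF hh(2)] by simp
      show "h1 x = h2 x"
      proof (cases "x = \<one>\<^bsub>G\<^esub>")
        case True then show ?thesis using autoD(4)[OF hh(1)] autoD(4)[OF hh(2)] by simp
      next
        case False
        have i1: "inj_on h1 (carrier G)" using autoD(2)[OF hh(1)] by (simp add: bij_betw_def)
        have "h1 x \<noteq> \<one>\<^bsub>G\<^esub>" using i1 x False autoD(4)[OF hh(1)] unfolding inj_on_def by (metis one_closed)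
        then show ?thesis using e by (auto simp: doubleton_eq_iff)
      qed
    qed
  qed
  have Phi_surj: "auto ?P \<subseteq> \<Phi> ` auto G"
  proof
    fix f assume f: "f \<in> auto ?P"
    have fh: "f \<in> hom ?P ?P" "bij_betw f PP PP" "f \<in> extensional PP"
      using f PC by (auto simp: auto_def Bij_def)
    interpret R: rpm_aut G f
      by (intro rpm_aut.intro rpm_aut_axioms.intro) (use fin fh assms(1) in auto)
    have NK: "R.NK" unfolding R.NK_def using nk by blast
    let ?h = "\<lambda>x\<in>carrier G. R.sg x"
    have hhom: "?h \<in> hom G G"
    proof (rule homI)
      fix x assume "x \<in> carrier G" then show "?h x \<in> carrier G" using R.sg_closed by simp
    next
      fix x y assume "x \<in> carrier G" "y \<in> carrier G"
      then show "?h (x \<otimes>\<^bsub>G\<^esub> y) = ?h x \<otimes>\<^bsub>G\<^esub> ?h y" using R.sg_hom[OF NK] by simp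
    qed
    have "bij_betw R.sg (carrier G) (carrier G)" using R.sg_inj R.sg_img by (simp add: bij_betw_def)
    moreover have "bij_betw ?h (carrier G) (carrier G) = bij_betw R.sg (carrier G) (carrier G)"
      by (rule bij_betw_cong) simp
    ultimately have "bij_betw ?h (carrier G) (carrier G)" by simp
    then have hauto: "?h \<in> auto G" using hhom by (simp add: auto_def Bij_def)
    have "\<Phi> ?h = f"
    proof (rule extensionalityI[of _ "carrier ?P"])
      show "\<Phi> ?h \<in> extensional (carrier ?P)" unfolding \<Phi>_def by simp
      show "f \<in> extensional (carrier ?P)" using fh PC by simp
      fix W assume W: "W \<in> carrier ?P"
      then have W': "W \<in> PP" using PC by simp
      have "\<Phi> ?h W = ?h ` W" unfolding \<Phi>_def using W by simp
      also have "\<dots> = R.sg ` W" using W' by (intro image_cong) auto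
      also have "\<dots> = f W" using R.f_img_all[OF NK W'] by simp
      finally show "\<Phi> ?h W = f W" .
    qed
    then have "f = \<Phi> ?h" by simp
    then show "f \<in> \<Phi> ` auto G" using hauto by (rule image_eqI)
  qed
  have "\<Phi> ` auto G = auto ?P" using Phi_surj Phi_auto by blast
  then have bj: "bij_betw \<Phi> (carrier (AutoGroup G)) (carrier (AutoGroup ?P))"
    using Phi_inj unfolding bij_betw_def AG_carrier by blast
  have "AutoGroup G \<cong> AutoGroup ?P" by (rule is_isoI[OF isoI[OF Phi_hom bj]])
  then show ?thesis using group.iso_sym[OF group.AutoGroup[OF is_group]] by blast
qed

end
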